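(* Let $Y$ be a set, $\Lambda$ an index set, and for each $\ell\in\Lambda$ let $\rho_\ell:Y\to Y_\ell$ be a surjective map onto a finite set $Y_\ell$. Let $(X,\mu)$ be a measure space with $\mu(X)<\infty$ and $F:X\to Y$, $x\mapsto F_x$, a map such that each set $\{x\in X\mid \rho_\ell(F_x)=y\}$ is measurable. For each $\ell\in\Lambda$ let $\nu_\ell$ be a probability density on $Y_\ell$ with $\nu_\ell(y)>0$ for all $y$, and let $\mathcal{B}_\ell$ be an orthonormal basis of the space $L^2(Y_\ell)$ of functions on $Y_\ell$ with inner product $\langle f,g\rangle=\sum_y\nu_\ell(y)f(y)\overline{g(y)}$, such that $\mathcal{B}_\ell$ contains the constant function $1$; put $\mathcal{B}_\ell^*=\mathcal{B}_\ell\setminus\{1\}$. For a finite subset $m\subset\Lambda$ let $Y_m=\prod_{\ell\in m}Y_\ell$, $\rho_m=(\rho_\ell)_{\ell\in m}:Y\to Y_m$, and $\mathcal{B}_m^*$ the set of functions $(y_\ell)\mapsto\prod_{\ell\in m}\varphi_\ell(y_\ell)$ with $\varphi_\ell\in\mathcal{B}_\ell^*$ (for $m=\emptyset$, $Y_m$ is a point and $\mathcal{B}_m^*=\{1\}$). Let $\mathcal{L}^*\subset\Lambda$ be finite, let $\mathcal{L}$ be a finite set of finite subsets of $\Lambda$ such that every element of every $m\in\mathcal{L}$ lies in $\mathcal{L}^*$ and $\{\ell\}\in\mathcal{L}$ for every $\ell\in\mathcal{L}^*$, and let $\Delta$ be the smallest non-negative real number such that $$\sum_{m\in\mathcal{L}}\sum_{\varphi\in\mathcal{B}_m^*}\Big|\int_X\alpha(x)\varphi(\rho_m(F_x))\,d\mu(x)\Big|^2\leq\Delta\int_X|\alpha(x)|^2\,d\mu(x)$$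 for every square-integrable $\alpha:X\to\mathbf{C}$. Then for arbitrary subsets $\Omega_\ell\subset Y_\ell$ ($\ell\in\mathcal{L}^*$), the set $S(X,\Omega;\mathcal{L}^* )=\{x\in X\mid \rho_\ell(F_x)\notin\Omega_\ell \text{ for all } \ell\in\mathcal{L}^*\}$ satisfies $$\mu(S(X,\Omega;\mathcal{L}^* ))\leq\Delta H^{-1},\qquad H=\sum_{m\in\mathcal{L}}\prod_{\ell\in m}\frac{\nu_\ell(\Omega_\ell)}{1-\nu_\ell(\Omega_\ell)},$$ where $\nu_\ell(\Omega_\ell)=\sum_{y\in\Omega_\ell}\nu_\ell(y)$. *)

theory Defs
  imports "HOL-Analysis.Analysis"
begin

definition nu_inner :: "('z \<Rightarrow> real) \<Rightarrow> 'z set \<Rightarrow> ('z \<Rightarrow> complex) \<Rightarrow> ('z \<Rightarrow> complex) \<Rightarrow> complex" where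
  "nu_inner \<nu> A f g = (\<Sum>y\<in>A. complex_of_real (\<nu> y) * f y * cnj (g y))"

definition nu_orthonormal_basis :: "('z \<Rightarrow> real) \<Rightarrow> 'z set \<Rightarrow> ('z \<Rightarrow> complex) set \<Rightarrow> bool" where
  "nu_orthonormal_basis \<nu> A B \<longleftrightarrow>
     finite B \<and>
     (\<forall>\<phi>\<in>B. \<forall>\<psi>\<in>B. nu_inner \<nu> A \<phi> \<psi> = (if \<phi> = \<psi> then 1 else 0)) \<and>
     (\<forall>f :: 'z \<Rightarrow> complex. \<exists>c. \<forall>y\<in>A. f y = (\<Sum>\<phi>\<in>B. c \<phi> * \<phi> y))"

definition rho_m :: "('l \<Rightarrow> 'y \<Rightarrow> 'z) \<Rightarrow> 'l set \<Rightarrow> 'y \<Rightarrow> ('l \<Rightarrow> 'z)" where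
  "rho_m \<rho> m u = restrict (\<lambda>l. \<rho> l u) m"

definition Bstar_m :: "('l \<Rightarrow> ('z \<Rightarrow> complex) set) \<Rightarrow> 'l set \<Rightarrow> (('l \<Rightarrow> 'z) \<Rightarrow> complex) set" where
  "Bstar_m B m = {(\<lambda>y. \<Prod>l\<in>m. \<phi> l (y l)) | \<phi>. \<forall>l\<in>m. \<phi> l \<in> B l - {(\<lambda>_. 1)}}"

definition square_integrable :: "'x measure \<Rightarrow> ('x \<Rightarrow> complex) \<Rightarrow> bool" where
  "square_integrable M \<alpha> \<longleftrightarrow> \<alpha> \<in> borel_measurable M \<and> integrable M (\<lambda>x. (cmod (\<alpha> x))\<^sup>2)"

definition nu_set :: "('z \<Rightarrow> real) \<Rightarrow> 'z set \<Rightarrow> real" where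
  "nu_set \<nu> \<Omega> = (\<Sum>y\<in>\<Omega>. \<nu> y)"

end

theory Submission
  imports Defs
begin

lemma onb_expand:
  assumes onb: "nu_orthonormal_basis \<nu> Y B" and finY: "finite Y" and y: "y \<in> Y"
  shows "g y = (\<Sum>\<psi>\<in>B. nu_inner \<nu> Y g \<psi> * \<psi> y)"
proof -
  from onb have finB: "finite B" and orth: "\<And>\<phi> \<psi>. \<phi>\<in>B \<Longrightarrow> \<psi>\<in>B \<Longrightarrow> nu_inner \<nu> Y \<phi> \<psi> = (if \<phi> = \<psi> then 1 else 0)"
    and "\<exists>c. \<forall>y\<in>Y. g y = (\<Sum>\<phi>\<in>B. c \<phi> * \<phi> y)"
    unfolding nu_orthonormal_basis_def by blast+
  then obtain c where c: "\<And>y. y\<in>Y \<Longrightarrow> g y = (\<Sum>\<phi>\<in>B. c \<phi> * \<phi> y)" by blast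
  have coef: "nu_inner \<nu> Y g ch = c ch" if "ch \<in> B" for ch
  proof -
    have "nu_inner \<nu> Y g ch = (\<Sum>y\<in>Y. complex_of_real (\<nu> y) * (\<Sum>\<phi>\<in>B. c \<phi> * \<phi> y) * cnj (ch y))"
      unfolding nu_inner_def by (intro sum.cong refl) (simp add: c)
    also have "\<dots> = (\<Sum>y\<in>Y. \<Sum>\<phi>\<in>B. c \<phi> * (complex_of_real (\<nu> y) * \<phi> y * cnj (ch y)))"
      by (simp add: sum_distrib_left sum_distrib_right mult_ac)
    also have "\<dots> = (\<Sum>\<phi>\<in>B. \<Sum>y\<in>Y. c \<phi> * (complex_of_real (\<nu> y) * \<phi> y * cnj (ch y)))"
      by (rule sum.swap)
    also have "\<dots> = (\<Sum>\<phi>\<in>B. c \<phi> * nu_inner \<nu> Y \<phi> ch)"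
      unfolding nu_inner_def by (simp add: sum_distrib_left)
    also have "\<dots> = (\<Sum>\<phi>\<in>B. c \<phi> * (if \<phi> = ch then 1 else 0))"
      using orth that by (intro sum.cong) auto
    also have "\<dots> = (\<Sum>\<phi>\<in>B. if \<phi> = ch then c \<phi> else 0)"
      by (intro sum.cong) auto
    also have "\<dots> = c ch" using finB that by (simp add: sum.delta')
    finally show ?thesis .
  qed
  show ?thesis using c[OF y] coef by simp
qed

lemma onb_parseval:
  assumes onb: "nu_orthonormal_basis \<nu> Y B" and finY: "finite Y"
  shows "nu_inner \<nu> Y g g = complex_of_real (\<Sum>\<psi>\<in>B. (cmod (nu_inner \<nu> Y g \<psi>))\<^sup>2)"
proof -
  have "nu_inner \<nu> Y g g = (\<Sum>y\<in>Y. complex_of_real (\<nu> y) * g y * cnj (\<Sum>\<psi>\<in>B. nu_inner \<nu> Y g \<psi> * \<psi> y))"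
    using onb_expand[OF onb finY, of _ g]
    unfolding nu_inner_def by (intro sum.cong refl) (simp only:)
  also have "\<dots> = (\<Sum>y\<in>Y. \<Sum>\<psi>\<in>B. cnj (nu_inner \<nu> Y g \<psi>) * (complex_of_real (\<nu> y) * g y * cnj (\<psi> y)))"
    by (simp add: cnj_sum sum_distrib_left sum_distrib_right mult_ac)
  also have "\<dots> = (\<Sum>\<psi>\<in>B. \<Sum>y\<in>Y. cnj (nu_inner \<nu> Y g \<psi>) * (complex_of_real (\<nu> y) * g y * cnj (\<psi> y)))"
    by (rule sum.swap)
  also have "\<dots> = (\<Sum>\<psi>\<in>B. cnj (nu_inner \<nu> Y g \<psi>) * nu_inner \<nu> Y g \<psi>)"
    by (simp only: sum_distrib_left[symmetric] nu_inner_def[symmetric])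
  also have "\<dots> = complex_of_real (\<Sum>\<psi>\<in>B. (cmod (nu_inner \<nu> Y g \<psi>))\<^sup>2)"
    unfolding of_real_sum by (intro sum.cong refl, subst complex_norm_square) (simp add: mult.commute)
  finally show ?thesis .
qed

lemma coord_facts:
  assumes onb: "nu_orthonormal_basis \<nu> Y B" and finY: "finite Y" and one: "(\<lambda>_. 1) \<in> B"
    and sum1: "(\<Sum>y\<in>Y. \<nu> y) = 1" and Om: "\<Omega> \<subseteq> Y"
    and f_def: "f = (\<lambda>y. complex_of_real ((if y \<in> \<Omega> then 1 else 0) - nu_set \<nu> \<Omega>))"
  shows "\<And>y. y\<in>Y \<Longrightarrow> f y = (\<Sum>\<psi>\<in>B - {\<lambda>_. 1}. nu_inner \<nu> Y f \<psi> * \<psi> y)"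
    and "(\<Sum>\<psi>\<in>B - {\<lambda>_. 1}. (cmod (nu_inner \<nu> Y f \<psi>))\<^sup>2) = nu_set \<nu> \<Omega> * (1 - nu_set \<nu> \<Omega>)"
proof -
  define p where "p = nu_set \<nu> \<Omega>"
  define r where "r = (\<lambda>y. (if y \<in> \<Omega> then 1 else 0) - p)"
  have f: "f = (\<lambda>y. complex_of_real (r y))" unfolding f_def r_def p_def ..
  from onb have finB: "finite B" unfolding nu_orthonormal_basis_def by blast
  have finO: "finite \<Omega>" using finY Om finite_subset by blast
  have YO: "Y \<inter> {y. y \<in> \<Omega>} = \<Omega>" "Y \<inter> - {y. y \<in> \<Omega>} = Y - \<Omega>" using Om by auto
  have sO: "(\<Sum>y\<in>Y - \<Omega>. \<nu> y) = 1 - p"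
    using sum_diff[OF finY Om, of \<nu>] sum1 unfolding p_def nu_set_def by simp
  have "(\<Sum>y\<in>Y. \<nu> y * r y) = (\<Sum>y\<in>Y. if y \<in> \<Omega> then \<nu> y * (1 - p) else \<nu> y * (0 - p))"
    unfolding r_def by (intro sum.cong) auto
  also have "\<dots> = p * (1 - p) + (1 - p) * (0 - p)"
    unfolding sum.If_cases[OF finY] YO sum_distrib_right[symmetric] sO
    by (simp add: p_def nu_set_def)
  finally have c1r: "(\<Sum>y\<in>Y. \<nu> y * r y) = 0" by (simp add: algebra_simps)
  have c1: "nu_inner \<nu> Y f (\<lambda>_. 1) = 0"
    unfolding nu_inner_def f using c1r
    by (metis (no_types, lifting) complex_cnj_one mult.right_neutral of_real_0 of_real_mult of_real_sum sum.cong)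
  have "(\<Sum>y\<in>Y. \<nu> y * (r y)\<^sup>2) = (\<Sum>y\<in>Y. if y \<in> \<Omega> then \<nu> y * (1 - p)\<^sup>2 else \<nu> y * p\<^sup>2)"
    unfolding r_def by (intro sum.cong) auto
  also have "\<dots> = p * (1 - p)\<^sup>2 + (1 - p) * p\<^sup>2"
    unfolding sum.If_cases[OF finY] YO sum_distrib_right[symmetric] sO
    by (simp add: p_def nu_set_def)
  also have "\<dots> = p * (1 - p)" by (simp add: power2_eq_square algebra_simps)
  finally have nr: "(\<Sum>y\<in>Y. \<nu> y * (r y)\<^sup>2) = p * (1 - p)" .
  have "nu_inner \<nu> Y f f = complex_of_real (\<Sum>y\<in>Y. \<nu> y * (r y)\<^sup>2)"
    unfolding nu_inner_def f of_real_sum by (intro sum.cong) (auto simp: power2_eq_square)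
  then have A: "nu_inner \<nu> Y f f = complex_of_real (p * (1 - p))" by (simp only: nr)
  have "complex_of_real (\<Sum>\<psi>\<in>B. (cmod (nu_inner \<nu> Y f \<psi>))\<^sup>2) = complex_of_real (p * (1 - p))"
    using onb_parseval[OF onb finY, of f] A by metis
  then have "(\<Sum>\<psi>\<in>B. (cmod (nu_inner \<nu> Y f \<psi>))\<^sup>2) = p * (1 - p)" by (rule of_real_eq_iff[THEN iffD1])
  then show "(\<Sum>\<psi>\<in>B - {\<lambda>_. 1}. (cmod (nu_inner \<nu> Y f \<psi>))\<^sup>2) = nu_set \<nu> \<Omega> * (1 - nu_set \<nu> \<Omega>)"
    using sum.remove[OF finB one, of "\<lambda>\<psi>. (cmod (nu_inner \<nu> Y f \<psi>))\<^sup>2"] c1 by (simp add: p_def)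
  fix y assume y: "y \<in> Y"
  show "f y = (\<Sum>\<psi>\<in>B - {\<lambda>_. 1}. nu_inner \<nu> Y f \<psi> * \<psi> y)"
    using onb_expand[OF onb finY y, of f] sum.remove[OF finB one, of "\<lambda>\<psi>. nu_inner \<nu> Y f \<psi> * \<psi> y"] c1
    by simp
qed

lemma Bstar_m_image:
  "Bstar_m B m = (\<lambda>t y. \<Prod>l\<in>m. t l (y l)) ` PiE m (\<lambda>l. B l - {\<lambda>_. 1})"
proof
  show "Bstar_m B m \<subseteq> (\<lambda>t y. \<Prod>l\<in>m. t l (y l)) ` PiE m (\<lambda>l. B l - {\<lambda>_. 1})"
  proof
    fix g assume "g \<in> Bstar_m B m"
    then obtain \<phi> where g: "g = (\<lambda>y. \<Prod>l\<in>m. \<phi> l (y l))" and ph: "\<forall>l\<in>m. \<phi> l \<in> B l - {\<lambda>_. 1}"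
      unfolding Bstar_m_def by blast
    have "restrict \<phi> m \<in> PiE m (\<lambda>l. B l - {\<lambda>_. 1})" using ph by auto
    moreover have "g = (\<lambda>y. \<Prod>l\<in>m. restrict \<phi> m l (y l))" unfolding g by (auto intro!: prod.cong)
    ultimately show "g \<in> (\<lambda>t y. \<Prod>l\<in>m. t l (y l)) ` PiE m (\<lambda>l. B l - {\<lambda>_. 1})" by blast
  qed
next
  show "(\<lambda>t y. \<Prod>l\<in>m. t l (y l)) ` PiE m (\<lambda>l. B l - {\<lambda>_. 1}) \<subseteq> Bstar_m B m"
    unfolding Bstar_m_def by (auto simp: PiE_def Pi_def)
qed

lemma prod_inner:
  fixes \<nu> :: "'l \<Rightarrow> 'z \<Rightarrow> real"
  assumes "finite m" "\<And>l. l \<in> m \<Longrightarrow> finite (Y l)"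
  shows "(\<Sum>y\<in>PiE m Y. complex_of_real (\<Prod>l\<in>m. \<nu> l (y l)) * (\<Prod>l\<in>m. t l (y l)) * cnj (\<Prod>l\<in>m. s l (y l)))
     = (\<Prod>l\<in>m. nu_inner (\<nu> l) (Y l) (t l) (s l))"
proof -
  have "(\<Prod>l\<in>m. nu_inner (\<nu> l) (Y l) (t l) (s l)) =
     (\<Sum>y\<in>PiE m Y. \<Prod>l\<in>m. complex_of_real (\<nu> l (y l)) * t l (y l) * cnj (s l (y l)))"
    unfolding nu_inner_def by (rule prod_sum_PiE[OF assms])
  also have "\<dots> = (\<Sum>y\<in>PiE m Y. complex_of_real (\<Prod>l\<in>m. \<nu> l (y l)) * (\<Prod>l\<in>m. t l (y l)) * cnj (\<Prod>l\<in>m. s l (y l)))"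
    by (simp add: prod.distrib cnj_prod)
  finally show ?thesis by simp
qed

lemma inj_prod:
  fixes \<nu> :: "'l \<Rightarrow> 'z \<Rightarrow> real"
  assumes fin: "finite m" and finY: "\<And>l. l \<in> m \<Longrightarrow> finite (Y l)"
    and onb: "\<And>l. l \<in> m \<Longrightarrow> nu_orthonormal_basis (\<nu> l) (Y l) (B l)"
  shows "inj_on (\<lambda>t y. \<Prod>l\<in>m. t l (y l)) (PiE m B)"
proof
  fix t s assume t: "t \<in> PiE m B" and s: "s \<in> PiE m B"
    and eq: "(\<lambda>y. \<Prod>l\<in>m. t l (y l)) = (\<lambda>y. \<Prod>l\<in>m. s l (y l))"
  have orth: "nu_inner (\<nu> l) (Y l) a b = (if a = b then 1 else 0)" if "l \<in> m" "a \<in> B l" "b \<in> B l" for l a b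
    using onb[OF that(1)] that unfolding nu_orthonormal_basis_def by blast
  have eq': "(\<Prod>l\<in>m. s l (y l)) = (\<Prod>l\<in>m. t l (y l))" for y
    using fun_cong[OF eq, of y] by simp
  have "(\<Prod>l\<in>m. nu_inner (\<nu> l) (Y l) (t l) (s l)) = 
    (\<Sum>y\<in>PiE m Y. complex_of_real (\<Prod>l\<in>m. \<nu> l (y l)) * (\<Prod>l\<in>m. t l (y l)) * cnj (\<Prod>l\<in>m. s l (y l)))"
    by (rule prod_inner[OF fin finY, symmetric])
  also have "\<dots> = (\<Sum>y\<in>PiE m Y. complex_of_real (\<Prod>l\<in>m. \<nu> l (y l)) * (\<Prod>l\<in>m. t l (y l)) * cnj (\<Prod>l\<in>m. t l (y l)))"
    by (simp only: eq')
  also have "\<dots> = (\<Prod>l\<in>m. nu_inner (\<nu> l) (Y l) (t l) (t l))"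
    by (rule prod_inner[OF fin finY])
  also have "\<dots> = 1" using t orth by (intro prod.neutral) (simp add: PiE_iff)
  finally have P1: "(\<Prod>l\<in>m. nu_inner (\<nu> l) (Y l) (t l) (s l)) = 1" .
  show "t = s"
  proof (rule ccontr)
    assume "t \<noteq> s"
    then obtain k where k: "k \<in> m" "t k \<noteq> s k" using t s by (metis PiE_ext)
    then have "nu_inner (\<nu> k) (Y k) (t k) (s k) = 0" using orth[OF k(1) PiE_mem[OF t k(1)] PiE_mem[OF s k(1)]] k(2) by simp
    then have "(\<Prod>l\<in>m. nu_inner (\<nu> l) (Y l) (t l) (s l)) = 0" using fin k by (metis prod_zero_iff)
    with P1 show False by simp
  qed
qed

lemma integrable_fin:
  assumes fm: "finite_measure M" and finA: "finite A" and h: "h \<in> measurable M (count_space A)"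
    and S: "S \<in> sets M"
  shows "integrable M (\<lambda>x. (indicator S x :: complex) * g (h x))"
proof -
  interpret finite_measure M by (rule fm)
  have m1: "(\<lambda>x. g (h x)) \<in> borel_measurable M"
    using measurable_compose[OF h, of "\<lambda>a. g a"] by simp
  have "(\<lambda>x. (indicator S x :: complex) * g (h x)) \<in> borel_measurable M"
    using m1 S by (intro borel_measurable_times) auto
  moreover have "AE x in M. norm ((indicator S x :: complex) * g (h x)) \<le> (\<Sum>a\<in>A. norm (g a))"
  proof (rule AE_I2)
    fix x assume x: "x \<in> space M"
    have hx: "h x \<in> A" using measurable_space[OF h x] by simp
    have "norm ((indicator S x :: complex) * g (h x)) \<le> norm (g (h x))"
      by (simp add: indicator_def norm_mult)
    also have "\<dots> \<le> (\<Sum>a\<in>A. norm (g a))"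
      using finA hx by (intro member_le_sum) auto
    finally show "norm ((indicator S x :: complex) * g (h x)) \<le> (\<Sum>a\<in>A. norm (g a))" .
  qed
  ultimately show ?thesis by (intro integrable_const_bound) auto
qed

lemma cs_complex:
  fixes C I :: "'a \<Rightarrow> complex"
  assumes "finite T"
  shows "(cmod (\<Sum>t\<in>T. C t * I t))\<^sup>2 \<le> (\<Sum>t\<in>T. (cmod (C t))\<^sup>2) * (\<Sum>t\<in>T. (cmod (I t))\<^sup>2)"
proof -
  have "cmod (\<Sum>t\<in>T. C t * I t) \<le> (\<Sum>t\<in>T. cmod (C t * I t))" by (rule norm_sum)
  also have "\<dots> = (\<Sum>t\<in>T. \<bar>cmod (C t)\<bar> * \<bar>cmod (I t)\<bar>)" by (simp add: norm_mult)
  also have "\<dots> \<le> L2_set (\<lambda>t. cmod (C t)) T * L2_set (\<lambda>t. cmod (I t)) T" by (rule L2_set_mult_ineq)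
  finally have le: "cmod (\<Sum>t\<in>T. C t * I t) \<le> L2_set (\<lambda>t. cmod (C t)) T * L2_set (\<lambda>t. cmod (I t)) T" .
  have "(cmod (\<Sum>t\<in>T. C t * I t))\<^sup>2 \<le> (L2_set (\<lambda>t. cmod (C t)) T * L2_set (\<lambda>t. cmod (I t)) T)\<^sup>2"
    using le by (intro power_mono) auto
  also have "\<dots> = (\<Sum>t\<in>T. (cmod (C t))\<^sup>2) * (\<Sum>t\<in>T. (cmod (I t))\<^sup>2)"
    unfolding power_mult_distrib L2_set_def by (simp add: sum_nonneg)
  finally show ?thesis .
qed

lemma meas_rho_m:
  assumes fin: "finite m" and sub: "m \<subseteq> Lam"
    and surj: "\<And>l. l \<in> Lam \<Longrightarrow> \<rho> l ` UNIV = Yl l"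
    and meas_F: "\<And>l y. l \<in> Lam \<Longrightarrow> {x \<in> space M. \<rho> l (F x) = y} \<in> sets M"
    and finY: "\<And>l. l \<in> Lam \<Longrightarrow> finite (Yl l)"
  shows "(\<lambda>x. rho_m \<rho> m (F x)) \<in> measurable M (count_space (PiE m Yl))"
proof -
  have finP: "finite (PiE m Yl)" using fin finY sub by (intro finite_PiE) auto
  show ?thesis
  proof (subst measurable_count_space_eq2[OF finP], intro conjI ballI)
    show "(\<lambda>x. rho_m \<rho> m (F x)) \<in> space M \<rightarrow> PiE m Yl"
    proof
      fix x assume "x \<in> space M"
      have rY: "\<rho> l u \<in> Yl l" if "l \<in> Lam" for l u using surj[OF that] by blast
      show "rho_m \<rho> m (F x) \<in> PiE m Yl"
        using rY sub unfolding rho_m_def by (auto simp: PiE_iff)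
    qed
  next
    fix a assume a: "a \<in> PiE m Yl"
    have "(\<lambda>x. rho_m \<rho> m (F x)) -` {a} \<inter> space M = {x \<in> space M. \<forall>l\<in>m. \<rho> l (F x) = a l}"
    proof (intro set_eqI iffI)
      fix x assume "x \<in> (\<lambda>x. rho_m \<rho> m (F x)) -` {a} \<inter> space M"
      then show "x \<in> {x \<in> space M. \<forall>l\<in>m. \<rho> l (F x) = a l}"
        unfolding rho_m_def by (auto dest: fun_cong)
    next
      fix x assume "x \<in> {x \<in> space M. \<forall>l\<in>m. \<rho> l (F x) = a l}"
      then show "x \<in> (\<lambda>x. rho_m \<rho> m (F x)) -` {a} \<inter> space M"
        using a unfolding rho_m_def by (auto simp: PiE_iff restrict_def extensional_def)
    qed
    also have "\<dots> \<in> sets M"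
      using meas_F sub fin by (intro sets.sets_Collect_finite_All) auto
    finally show "(\<lambda>x. rho_m \<rho> m (F x)) -` {a} \<inter> space M \<in> sets M" .
  qed
qed

lemma final_step:
  fixes p :: "'l \<Rightarrow> real" and T :: "'l set \<Rightarrow> real"
  assumes L: "finite L" "\<And>m. m \<in> L \<Longrightarrow> finite m \<and> m \<subseteq> Lstar"
    and pb: "\<And>l. l \<in> Lstar \<Longrightarrow> 0 \<le> p l \<and> p l \<le> 1"
    and s0: "0 \<le> s" and D0: "0 \<le> \<Delta>"
    and key: "\<And>m. m \<in> L \<Longrightarrow> s\<^sup>2 * (\<Prod>l\<in>m. p l)\<^sup>2 \<le> (\<Prod>l\<in>m. p l * (1 - p l)) * T m"
    and Tnn: "\<And>m. m \<in> L \<Longrightarrow> 0 \<le> T m"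
    and total: "(\<Sum>m\<in>L. T m) \<le> \<Delta> * s"
    and one: "\<And>l. l \<in> Lstar \<Longrightarrow> p l = 1 \<Longrightarrow> s = 0"
    and H: "(\<Sum>m\<in>L. \<Prod>l\<in>m. ennreal (p l) / ennreal (1 - p l)) \<noteq> 0"
  shows "ennreal s \<le> ennreal \<Delta> / (\<Sum>m\<in>L. \<Prod>l\<in>m. ennreal (p l) / ennreal (1 - p l))"
proof (cases "s = 0")
  case True
  then show ?thesis by simp
next
  case False
  then have spos: "0 < s" using s0 by simp
  have plt: "p l < 1" if "l \<in> Lstar" for l using pb[OF that] one[OF that] False by force
  define q where "q m = (\<Prod>l\<in>m. p l / (1 - p l))" for m
  have qnn: "0 \<le> q m" if "m \<in> L" for m
    unfolding q_def using L(2)[OF that] pb plt by (intro prod_nonneg divide_nonneg_nonneg) auto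
  have Heq: "(\<Sum>m\<in>L. \<Prod>l\<in>m. ennreal (p l) / ennreal (1 - p l)) = ennreal (\<Sum>m\<in>L. q m)"
  proof -
    have "(\<Sum>m\<in>L. \<Prod>l\<in>m. ennreal (p l) / ennreal (1 - p l)) = (\<Sum>m\<in>L. ennreal (q m))"
    proof (intro sum.cong refl)
      fix m assume m: "m \<in> L"
      have "(\<Prod>l\<in>m. ennreal (p l) / ennreal (1 - p l)) = (\<Prod>l\<in>m. ennreal (p l / (1 - p l)))"
        using L(2)[OF m] pb plt by (intro prod.cong refl divide_ennreal) auto
      also have "\<dots> = ennreal (q m)" unfolding q_def
        using L(2)[OF m] pb plt by (intro prod_ennreal divide_nonneg_nonneg) auto
      finally show "(\<Prod>l\<in>m. ennreal (p l) / ennreal (1 - p l)) = ennreal (q m)" .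
    qed
    also have "\<dots> = ennreal (\<Sum>m\<in>L. q m)" using qnn by (intro sum_ennreal) auto
    finally show ?thesis .
  qed
  define Q where "Q = (\<Sum>m\<in>L. q m)"
  have Q0: "0 \<le> Q" unfolding Q_def using qnn by (intro sum_nonneg) auto
  have "Q \<noteq> 0" using H unfolding Heq Q_def by auto
  then have Qpos: "0 < Q" using Q0 by simp
  have per: "s\<^sup>2 * q m \<le> T m" if m: "m \<in> L" for m
  proof -
    have mf: "finite m" and ms: "m \<subseteq> Lstar" using L(2)[OF m] by auto
    define X where "X = (\<Prod>l\<in>m. p l * (1 - p l))"
    have X0: "0 \<le> X" unfolding X_def using ms pb plt by (intro prod_nonneg mult_nonneg_nonneg) auto
    show ?thesis
    proof (cases "X = 0")
      case True
      then obtain l where l: "l \<in> m" "p l * (1 - p l) = 0" unfolding X_def using mf by auto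
      moreover have "p l < 1" using plt ms l(1) by blast
      ultimately have "p l = 0" by simp
      then have "q m = 0" unfolding q_def using l mf by auto
      then show ?thesis using Tnn[OF m] by simp
    next
      case False
      then have Xpos: "0 < X" using X0 by simp
      have "q m * X = (\<Prod>l\<in>m. p l / (1 - p l) * (p l * (1 - p l)))"
        unfolding q_def X_def by (rule prod.distrib[symmetric])
      also have "\<dots> = (\<Prod>l\<in>m. (p l)\<^sup>2)"
      proof (intro prod.cong refl)
        fix l assume "l \<in> m"
        then have "1 - p l \<noteq> 0" using plt ms by force
        then show "p l / (1 - p l) * (p l * (1 - p l)) = (p l)\<^sup>2" by (simp add: power2_eq_square)
      qed
      also have "\<dots> = (\<Prod>l\<in>m. p l)\<^sup>2" by (simp add: prod_power_distrib)
      finally have qX: "q m * X = (\<Prod>l\<in>m. p l)\<^sup>2" .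
      have "(s\<^sup>2 * q m) * X = s\<^sup>2 * (q m * X)" by (simp only: mult.assoc)
      also have "\<dots> = s\<^sup>2 * (\<Prod>l\<in>m. p l)\<^sup>2" by (simp only: qX)
      also have "\<dots> \<le> X * T m" using key[OF m] unfolding X_def .
      finally have "(s\<^sup>2 * q m) * X \<le> T m * X" by (simp only: mult.commute)
      then show ?thesis using Xpos by simp
    qed
  qed
  have "s\<^sup>2 * Q \<le> \<Delta> * s"
  proof -
    have "s\<^sup>2 * Q = (\<Sum>m\<in>L. s\<^sup>2 * q m)" unfolding Q_def by (simp add: sum_distrib_left)
    also have "\<dots> \<le> (\<Sum>m\<in>L. T m)" using per by (intro sum_mono) auto
    also have "\<dots> \<le> \<Delta> * s" by (rule total)
    finally show ?thesis .
  qed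
  then have "s * Q \<le> \<Delta>" using spos by (simp add: power2_eq_square mult.assoc mult.commute)
  then have "s \<le> \<Delta> / Q" using Qpos by (simp add: field_simps)
  then show ?thesis unfolding Heq Q_def[symmetric] using divide_ennreal[OF D0 Qpos]
    by (simp add: ennreal_leI)
qed

theorem proposition2p4:
  fixes Lam :: "'l set"
    and Yl :: "'l \<Rightarrow> 'z set"
    and \<rho> :: "'l \<Rightarrow> 'y \<Rightarrow> 'z"
    and M :: "'x measure"
    and F :: "'x \<Rightarrow> 'y"
    and \<nu> :: "'l \<Rightarrow> 'z \<Rightarrow> real"
    and B :: "'l \<Rightarrow> ('z \<Rightarrow> complex) set"
    and Lstar :: "'l set"
    and L :: "'l set set"
    and \<Delta> :: real
    and Adm :: "real set"
    and \<Omega> :: "'l \<Rightarrow> 'z set"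
  assumes surj: "\<And>l. l \<in> Lam \<Longrightarrow> \<rho> l ` UNIV = Yl l"
    and fin_Yl: "\<And>l. l \<in> Lam \<Longrightarrow> finite (Yl l)"
    and fin_meas: "emeasure M (space M) < \<infinity>"
    and meas_F: "\<And>l y. l \<in> Lam \<Longrightarrow> {x \<in> space M. \<rho> l (F x) = y} \<in> sets M"
    and nu_pos: "\<And>l y. l \<in> Lam \<Longrightarrow> y \<in> Yl l \<Longrightarrow> \<nu> l y > 0"
    and nu_sum: "\<And>l. l \<in> Lam \<Longrightarrow> (\<Sum>y\<in>Yl l. \<nu> l y) = 1"
    and onb: "\<And>l. l \<in> Lam \<Longrightarrow> nu_orthonormal_basis (\<nu> l) (Yl l) (B l)"
    and one_in_B: "\<And>l. l \<in> Lam \<Longrightarrow> (\<lambda>_. 1) \<in> B l"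
    and Lstar: "finite Lstar" "Lstar \<subseteq> Lam"
    and L: "finite L" "\<And>m. m \<in> L \<Longrightarrow> finite m \<and> m \<subseteq> Lstar"
      "\<And>l. l \<in> Lstar \<Longrightarrow> {l} \<in> L"
    and Delta: "\<Delta> \<in> Adm" "\<And>D. D \<in> Adm \<Longrightarrow> \<Delta> \<le> D"
    and Adm_def: "Adm = {D. 0 \<le> D \<and>
        (\<forall>\<alpha>. square_integrable M \<alpha> \<longrightarrow>
          (\<Sum>m\<in>L. \<Sum>\<phi>\<in>Bstar_m B m.
              (cmod (LINT x|M. \<alpha> x * \<phi> (rho_m \<rho> m (F x))))\<^sup>2)
          \<le> D * (LINT x|M. (cmod (\<alpha> x))\<^sup>2))}"
    and Omega: "\<And>l. l \<in> Lstar \<Longrightarrow> \<Omega> l \<subseteq> Yl l"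
  shows "(let H = (\<Sum>m\<in>L. \<Prod>l\<in>m.
                 ennreal (nu_set (\<nu> l) (\<Omega> l)) / ennreal (1 - nu_set (\<nu> l) (\<Omega> l)))
          in H \<noteq> 0 \<longrightarrow>
             emeasure M {x \<in> space M. \<forall>l\<in>Lstar. \<rho> l (F x) \<notin> \<Omega> l} \<le> ennreal \<Delta> / H)"
proof -
  define p where "p l = nu_set (\<nu> l) (\<Omega> l)" for l
  define Bs where "Bs l = B l - {\<lambda>_. 1}" for l
  define f where "f l = (\<lambda>y. complex_of_real ((if y \<in> \<Omega> l then 1 else 0) - nu_set (\<nu> l) (\<Omega> l)))" for l
  define c where "c l \<psi> = nu_inner (\<nu> l) (Yl l) (f l) \<psi>" for l \<psi>
  define S where "S = {x \<in> space M. \<forall>l\<in>Lstar. \<rho> l (F x) \<notin> \<Omega> l}"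
  define \<alpha> where "\<alpha> x = (indicator S x :: complex)" for x
  define P where "P m t = (\<lambda>y. \<Prod>l\<in>m. t l (y l) :: complex)" for m and t :: "'l \<Rightarrow> 'z \<Rightarrow> complex"
  define I where "I m t = (LINT x|M. \<alpha> x * P m t (rho_m \<rho> m (F x)))" for m t
  define s where "s = measure M S"
  have fm: "finite_measure M" using fin_meas by (intro finite_measureI) auto
  have rY: "\<rho> l u \<in> Yl l" if "l \<in> Lam" for l u using surj[OF that] by blast
  have finO: "finite (\<Omega> l)" if "l \<in> Lstar" for l
    using Omega[OF that] fin_Yl Lstar(2) that finite_subset by blast
  have S_sets: "S \<in> sets M"
    unfolding S_def
  proof (intro sets.sets_Collect_finite_All Lstar(1))
    fix l assume l: "l \<in> Lstar"
    have "{x \<in> space M. \<rho> l (F x) \<notin> \<Omega> l} = {x \<in> space M. \<forall>y\<in>\<Omega> l. \<not> (\<rho> l (F x) = y)}" by blast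
    also have "\<dots> \<in> sets M"
      using l Lstar(2) meas_F finO[OF l]
      by (intro sets.sets_Collect_finite_All sets.sets_Collect_neg) auto
    finally show "{x \<in> space M. \<rho> l (F x) \<notin> \<Omega> l} \<in> sets M" .
  qed
  have s_nonneg: "0 \<le> s" unfolding s_def by simp
  have p_bounds: "0 \<le> p l \<and> p l \<le> 1" if l: "l \<in> Lstar" for l
  proof
    have lL: "l \<in> Lam" using l Lstar(2) by blast
    show "0 \<le> p l" unfolding p_def nu_set_def
      using Omega[OF l] nu_pos[OF lL] by (intro sum_nonneg) (auto intro: less_imp_le)
    have "p l \<le> (\<Sum>y\<in>Yl l. \<nu> l y)" unfolding p_def nu_set_def
      using Omega[OF l] nu_pos[OF lL] fin_Yl[OF lL] by (intro sum_mono2) (auto intro: less_imp_le)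
    then show "p l \<le> 1" using nu_sum[OF lL] by simp
  qed
  have int_alpha: "(LINT x|M. \<alpha> x) = complex_of_real s"
  proof -
    have "(LINT x|M. \<alpha> x) = (LINT x|M. complex_of_real (indicator S x))"
      unfolding \<alpha>_def by (intro Bochner_Integration.integral_cong refl) (simp add: indicator_def)
    also have "\<dots> = complex_of_real s"
      using sets.sets_into_space[OF S_sets] by (simp add: s_def Int_absorb2)
    finally show ?thesis .
  qed
  have int_alpha2: "(LINT x|M. (cmod (\<alpha> x))\<^sup>2) = s"
  proof -
    have "(LINT x|M. (cmod (\<alpha> x))\<^sup>2) = (LINT x|M. indicator S x)"
      unfolding \<alpha>_def by (intro Bochner_Integration.integral_cong refl) (simp add: indicator_def)
    also have "\<dots> = s"
      using sets.sets_into_space[OF S_sets] by (simp add: s_def Int_absorb2)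
    finally show ?thesis .
  qed
  have sq: "square_integrable M \<alpha>"
    unfolding square_integrable_def
  proof
    show "\<alpha> \<in> borel_measurable M" unfolding \<alpha>_def using S_sets by simp
    have "integrable M (indicator S :: 'x \<Rightarrow> real)"
      using S_sets fin_meas emeasure_space[of M S] by (intro integrable_real_indicator) auto
    moreover have "(\<lambda>x. (cmod (\<alpha> x))\<^sup>2) = indicator S"
      unfolding \<alpha>_def by (auto simp: indicator_def)
    ultimately show "integrable M (\<lambda>x. (cmod (\<alpha> x))\<^sup>2)" by simp
  qed
  have Adm_ineq: "(\<Sum>m\<in>L. \<Sum>\<phi>\<in>Bstar_m B m. (cmod (LINT x|M. \<alpha> x * \<phi> (rho_m \<rho> m (F x))))\<^sup>2) \<le> \<Delta> * s"
    and Delta_nonneg: "0 \<le> \<Delta>"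
    using Delta(1) sq int_alpha2 unfolding Adm_def by auto
  have reidx: "(\<Sum>\<phi>\<in>Bstar_m B m. (cmod (LINT x|M. \<alpha> x * \<phi> (rho_m \<rho> m (F x))))\<^sup>2)
      = (\<Sum>t\<in>PiE m Bs. (cmod (I m t))\<^sup>2)" if m: "m \<in> L" for m
  proof -
    have mfin: "finite m" and msub: "m \<subseteq> Lam" using L(2)[OF m] Lstar(2) by auto
    have inj: "inj_on (P m) (PiE m Bs)"
    proof (rule inj_on_subset)
      show "inj_on (P m) (PiE m B)" unfolding P_def
        using mfin msub fin_Yl onb by (intro inj_prod[where \<nu>=\<nu> and Y=Yl]) auto
      show "PiE m Bs \<subseteq> PiE m B" unfolding Bs_def by (auto simp: PiE_iff)
    qed
    have "Bstar_m B m = P m ` PiE m Bs" unfolding Bstar_m_image P_def Bs_def ..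
    then show ?thesis using inj by (simp add: sum.reindex I_def)
  qed
  have key: "s\<^sup>2 * (\<Prod>l\<in>m. p l)\<^sup>2 \<le> (\<Prod>l\<in>m. p l * (1 - p l)) * (\<Sum>t\<in>PiE m Bs. (cmod (I m t))\<^sup>2)"
    if m: "m \<in> L" for m
  proof -
    have mfin: "finite m" and mLs: "m \<subseteq> Lstar" using L(2)[OF m] by auto
    have mLam: "l \<in> Lam" if "l \<in> m" for l using mLs Lstar(2) that by blast
    have exp: "f l y = (\<Sum>\<psi>\<in>Bs l. c l \<psi> * \<psi> y)" if "l \<in> m" "y \<in> Yl l" for l y
      unfolding Bs_def c_def
      using coord_facts(1)[OF onb[OF mLam] fin_Yl[OF mLam] one_in_B[OF mLam] nu_sum[OF mLam]
          Omega f_def that(2)] mLs that(1) by blast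
    have nrm: "(\<Sum>\<psi>\<in>Bs l. (cmod (c l \<psi>))\<^sup>2) = p l * (1 - p l)" if "l \<in> m" for l
      unfolding Bs_def c_def p_def
      using coord_facts(2)[OF onb[OF mLam] fin_Yl[OF mLam] one_in_B[OF mLam] nu_sum[OF mLam]
          Omega f_def] mLs that by blast
    have finBs: "finite (Bs l)" if "l \<in> m" for l
      using onb[OF mLam[OF that]] unfolding Bs_def nu_orthonormal_basis_def by blast
    have finT: "finite (PiE m Bs)" using mfin finBs by (intro finite_PiE) auto
    define C where "C t = (\<Prod>l\<in>m. c l (t l))" for t
    have pt: "complex_of_real (\<Prod>l\<in>m. - p l) = (\<Sum>t\<in>PiE m Bs. C t * P m t (rho_m \<rho> m (F x)))"
      if x: "x \<in> S" for x
    proof -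
      have "complex_of_real (\<Prod>l\<in>m. - p l) = (\<Prod>l\<in>m. f l (\<rho> l (F x)))"
        unfolding of_real_prod using x mLs unfolding S_def f_def p_def
        by (intro prod.cong refl) auto
      also have "\<dots> = (\<Prod>l\<in>m. \<Sum>\<psi>\<in>Bs l. c l \<psi> * \<psi> (\<rho> l (F x)))"
        using exp rY mLam by (intro prod.cong refl) auto
      also have "\<dots> = (\<Sum>t\<in>PiE m Bs. \<Prod>l\<in>m. c l (t l) * t l (\<rho> l (F x)))"
        using mfin finBs by (rule prod_sum_PiE)
      also have "\<dots> = (\<Sum>t\<in>PiE m Bs. C t * P m t (rho_m \<rho> m (F x)))"
        unfolding C_def P_def rho_m_def by (intro sum.cong refl) (simp add: prod.distrib)
      finally show ?thesis .
    qed
    have integ: "integrable M (\<lambda>x. \<alpha> x * P m t (rho_m \<rho> m (F x)))" for t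
      unfolding \<alpha>_def
      using mfin mLs Lstar(2) surj meas_F fin_Yl
      by (intro integrable_fin[OF fm _ meas_rho_m[where Lam=Lam and Yl=Yl] S_sets] finite_PiE) auto
    have "(\<Sum>t\<in>PiE m Bs. C t * I m t) = (\<Sum>t\<in>PiE m Bs. (LINT x|M. C t * (\<alpha> x * P m t (rho_m \<rho> m (F x)))))"
      unfolding I_def by simp
    also have "\<dots> = (LINT x|M. (\<Sum>t\<in>PiE m Bs. C t * (\<alpha> x * P m t (rho_m \<rho> m (F x)))))"
      using integ by (intro Bochner_Integration.integral_sum[symmetric] integrable_mult_right)
    also have "\<dots> = (LINT x|M. \<alpha> x * complex_of_real (\<Prod>l\<in>m. - p l))"
    proof (intro Bochner_Integration.integral_cong refl)
      fix x assume "x \<in> space M"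
      show "(\<Sum>t\<in>PiE m Bs. C t * (\<alpha> x * P m t (rho_m \<rho> m (F x)))) = \<alpha> x * complex_of_real (\<Prod>l\<in>m. - p l)"
      proof (cases "x \<in> S")
        case True
        then show ?thesis using pt[OF True] unfolding \<alpha>_def by simp
      next
        case False
        then show ?thesis unfolding \<alpha>_def by simp
      qed
    qed
    also have "\<dots> = complex_of_real s * complex_of_real (\<Prod>l\<in>m. - p l)"
      using int_alpha by simp
    finally have intg: "(\<Sum>t\<in>PiE m Bs. C t * I m t) = complex_of_real s * complex_of_real (\<Prod>l\<in>m. - p l)" .
    have pnn: "0 \<le> p l" if "l \<in> m" for l using p_bounds mLs that by blast
    have e1: "\<bar>\<Prod>l\<in>m. - p l\<bar> = (\<Prod>l\<in>m. p l)"
      unfolding abs_prod using pnn by (intro prod.cong refl) simp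
    have "cmod (complex_of_real s * complex_of_real (\<Prod>l\<in>m. - p l)) = s * (\<Prod>l\<in>m. p l)"
      unfolding norm_mult norm_of_real e1 using s_nonneg by simp
    then have lhs: "(cmod (\<Sum>t\<in>PiE m Bs. C t * I m t))\<^sup>2 = s\<^sup>2 * (\<Prod>l\<in>m. p l)\<^sup>2"
      unfolding intg by (simp add: power_mult_distrib)
    have "(\<Sum>t\<in>PiE m Bs. (cmod (C t))\<^sup>2) = (\<Sum>t\<in>PiE m Bs. \<Prod>l\<in>m. (cmod (c l (t l)))\<^sup>2)"
      unfolding C_def by (simp add: prod_norm[symmetric] prod_power_distrib)
    also have "\<dots> = (\<Prod>l\<in>m. \<Sum>\<psi>\<in>Bs l. (cmod (c l \<psi>))\<^sup>2)"
      using mfin finBs by (rule prod_sum_PiE[symmetric])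
    also have "\<dots> = (\<Prod>l\<in>m. p l * (1 - p l))" using nrm by (intro prod.cong refl) auto
    finally have Cn: "(\<Sum>t\<in>PiE m Bs. (cmod (C t))\<^sup>2) = (\<Prod>l\<in>m. p l * (1 - p l))" .
    show ?thesis using cs_complex[OF finT, of C "I m"] lhs Cn by simp
  qed
  have pnot: "s = 0" if l: "l \<in> Lstar" and p1: "p l = 1" for l
  proof -
    have lL: "l \<in> Lam" using l Lstar(2) by blast
    have "(\<Sum>y\<in>Yl l - \<Omega> l. \<nu> l y) = 0"
      using sum_diff[OF fin_Yl[OF lL] Omega[OF l], of "\<nu> l"] nu_sum[OF lL] p1
      unfolding p_def nu_set_def by simp
    have YO: "Yl l - \<Omega> l = {}"
    proof (rule ccontr)
      assume "Yl l - \<Omega> l \<noteq> {}"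
      then obtain y where y: "y \<in> Yl l - \<Omega> l" by blast
      have "\<nu> l y \<le> (\<Sum>y\<in>Yl l - \<Omega> l. \<nu> l y)"
        using y fin_Yl[OF lL] nu_pos[OF lL] by (intro member_le_sum) (auto intro: less_imp_le)
      then show False using \<open>(\<Sum>y\<in>Yl l - \<Omega> l. \<nu> l y) = 0\<close> nu_pos[OF lL, of y] y by simp
    qed
    have "S = {}" unfolding S_def using l rY[OF lL] YO by blast
    then show ?thesis unfolding s_def by simp
  qed
  have total: "(\<Sum>m\<in>L. \<Sum>t\<in>PiE m Bs. (cmod (I m t))\<^sup>2) \<le> \<Delta> * s"
    using Adm_ineq reidx by simp
  have emS: "emeasure M S = ennreal s"
    unfolding s_def by (rule finite_measure.emeasure_eq_measure[OF fm])
  show ?thesis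
    unfolding Let_def p_def[symmetric] S_def[symmetric] emS
    apply (intro impI)
    apply (rule final_step[OF L(1) L(2) p_bounds s_nonneg Delta_nonneg key _ total pnot])
    by (auto intro: sum_nonneg)

qed

end
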